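(* Let $d$ and $K\ge 2$ be integers with $d\ge K$, and let $\hat{\mathbf{W}}_{\rm ETF}=[\hat{\mathbf{w}}_1,\dots,\hat{\mathbf{w}}_K]\in\mathbb{R}^{d\times K}$ be a simplex equiangular tight frame, i.e. $\hat{\mathbf{W}}_{\rm ETF}=\sqrt{\frac{K}{K-1}}\,\mathbf{U}\left(\mathbf{I}_K-\frac{1}{K}\mathbf{1}_K\mathbf{1}_K^T\right)$ for some $\mathbf{U}\in\mathbb{R}^{d\times K}$ with $\mathbf{U}^T\mathbf{U}=\mathbf{I}_K$ (so that $\hat{\mathbf{w}}_{k}^T\hat{\mathbf{w}}_{k'}=\frac{K}{K-1}\delta_{k,k'}-\frac{1}{K-1}$ for all $k,k'\in[1,K]$). Consider $T+1$ sessions $t=0,1,\dots,T$. The label space $\{1,\dots,K\}$ is partitioned into pairwise disjoint nonempty sets $\mathcal{C}^{(0)},\dots,\mathcal{C}^{(T)}$, where session $t$ contains the $K^{(t)}=|\mathcal{C}^{(t)}|$ classes of $\mathcal{C}^{(t)}$, so $K=\sum_{t=0}^T K^{(t)}$. Each class $k$ has $n_k\ge 1$ samples (the $n_k$ may be arbitrary and the $K^{(t)}$ may differ across sessions), and session $t$ has $N^{(t)}=\sum_{k\in\mathcal{C}^{(t)}} n_k$ samples. For each session $t$ consider the problem $$\min_{\mathbf{M}^{(t)}}\ \frac{1}{N^{(t)}}\sum_{k\in\mathcal{C}^{(t)}}\sum_{i=1}^{n_k}\mathcal{L}\left(\mathbf{m}^{(t)}_{k,i},\hat{\mathbf{W}}_{\rm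 ETF}\right)\quad\text{s.t.}\quad \|\mathbf{m}^{(t)}_{k,i}\|^2\le 1\ \ \forall k\in\mathcal{C}^{(t)},\ 1\le i\le n_k,$$ where $\mathbf{m}^{(t)}_{k,i}\in\mathbb{R}^d$ is a free feature variable for the $i$-th sample of class $k$ in session $t$, $\mathbf{M}^{(t)}\in\mathbb{R}^{d\times N^{(t)}}$ is the collection of these variables, and $\hat{\mathbf{W}}_{\rm ETF}$ is held fixed. The loss $\mathcal{L}$ for a feature $\mathbf{m}$ of class $k$ is either the cross-entropy loss $\mathcal{L}(\mathbf{m},\hat{\mathbf{W}}_{\rm ETF})=-\log\frac{\exp(\hat{\mathbf{w}}_k^T\mathbf{m})}{\sum_{j=1}^K\exp(\hat{\mathbf{w}}_j^T\mathbf{m})}$ or the dot-regression loss $\mathcal{L}(\mathbf{m},\hat{\mathbf{W}}_{\rm ETF})=\frac{1}{2}\left(\hat{\mathbf{w}}_k^T\mathbf{m}-1\right)^2$. Let $\hat{\mathbf{M}}^{(t)}$ denote the global minimizer of this problem for session $t$, obtained by optimizing incrementally for $t=0,1,\dots,T$, and let $\hat{\mathbf{M}}=[\hat{\mathbf{M}}^{(0)},\dots,\hat{\mathbf{M}}^{(T)}]\in\mathbb{R}^{d\times\sum_{t=0}^T N^{(t)}}$. Then, for either choice of loss, every column $\hat{\mathbf{m}}_{k,i}$ of $\hat{\mathbf{M}}$ with class label $k$ satisfies $$\|\hat{\mathbf{m}}_{k,i}\|=1,\qquad \hat{\mathbf{m}}_{k,i}^T\hat{\mathbf{w}}_{k'}=\frac{K}{K-1}\delta_{k,k'}-\frac{1}{K-1}\quad\forall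 k,k'\in[1,K],\ 1\le i\le n_k,$$ where $\delta_{k,k'}=1$ if $k=k'$ and $0$ otherwise.
   Context: This is a simplified ("unconstrained features") model of few-shot class-incremental learning: the backbone network is dropped and the last-layer features are treated as independent optimization variables, while the classifier is a fixed simplex ETF covering the whole label space of all sessions. $\mathbf{I}_K$ is the $K\times K$ identity matrix and $\mathbf{1}_K$ the all-ones vector in $\mathbb{R}^K$. *)

theory Defs
  imports "HOL-Analysis.Analysis"
begin

text \<open>Classes are labelled 1..K, samples of class k are labelled 1..n k.
  Vectors in R^d are represented as real^'d with d = CARD('d).\<close>

definition etf_col :: "nat \<Rightarrow> (nat \<Rightarrow> real ^ 'd) \<Rightarrow> nat \<Rightarrow> real ^ 'd" where
  "etf_col K U k = sqrt (real K / (real K - 1)) *\<^sub>R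
      (\<Sum>j\<in>{1..K}. ((if j = k then 1 else 0) - 1 / real K) *\<^sub>R U j)"

definition orthonormal_cols :: "nat \<Rightarrow> (nat \<Rightarrow> real ^ 'd) \<Rightarrow> bool" where
  "orthonormal_cols K U \<longleftrightarrow>
     (\<forall>j\<in>{1..K}. \<forall>l\<in>{1..K}. U j \<bullet> U l = (if j = l then 1 else 0))"

datatype loss_kind = CrossEntropy | DotRegression

definition loss :: "loss_kind \<Rightarrow> nat \<Rightarrow> (nat \<Rightarrow> real ^ 'd) \<Rightarrow> nat \<Rightarrow> real ^ 'd \<Rightarrow> real" where
  "loss L K W k m = (case L of
      CrossEntropy \<Rightarrow> - ln (exp (W k \<bullet> m) / (\<Sum>j\<in>{1..K}. exp (W j \<bullet> m)))
    | DotRegression \<Rightarrow> (1/2) * (W k \<bullet> m - 1)^2)"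

definition session_obj ::
  "loss_kind \<Rightarrow> nat \<Rightarrow> (nat \<Rightarrow> real ^ 'd) \<Rightarrow> (nat \<Rightarrow> nat) \<Rightarrow> nat set
     \<Rightarrow> (nat \<Rightarrow> nat \<Rightarrow> real ^ 'd) \<Rightarrow> real" where
  "session_obj L K W n C M =
     (1 / real (\<Sum>k\<in>C. n k)) * (\<Sum>k\<in>C. \<Sum>i\<in>{1..n k}. loss L K W k (M k i))"

definition session_feasible :: "(nat \<Rightarrow> nat) \<Rightarrow> nat set \<Rightarrow> (nat \<Rightarrow> nat \<Rightarrow> real ^ 'd) \<Rightarrow> bool" where
  "session_feasible n C M \<longleftrightarrow> (\<forall>k\<in>C. \<forall>i\<in>{1..n k}. (norm (M k i))^2 \<le> 1)"

definition session_global_min ::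
  "loss_kind \<Rightarrow> nat \<Rightarrow> (nat \<Rightarrow> real ^ 'd) \<Rightarrow> (nat \<Rightarrow> nat) \<Rightarrow> nat set
     \<Rightarrow> (nat \<Rightarrow> nat \<Rightarrow> real ^ 'd) \<Rightarrow> bool" where
  "session_global_min L K W n C M \<longleftrightarrow>
     session_feasible n C M \<and>
     (\<forall>M'. session_feasible n C M' \<longrightarrow> session_obj L K W n C M \<le> session_obj L K W n C M')"

end

theory Submission
  imports Defs
begin

lemma etf_col_alt:
  assumes "k \<in> {1..K}"
  shows "etf_col K U k = sqrt (real K / (real K - 1)) *\<^sub>R (U k - (1 / real K) *\<^sub>R (\<Sum>j\<in>{1..K}. U j))"
proof -
  have "(\<Sum>j\<in>{1..K}. ((if j = k then 1 else 0) - 1 / real K) *\<^sub>R U j)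
      = (\<Sum>j\<in>{1..K}. (if j = k then U j else 0)) - (\<Sum>j\<in>{1..K}. (1 / real K) *\<^sub>R U j)"
  proof -
    have "(\<Sum>j\<in>{1..K}. ((if j = k then 1 else 0) - 1 / real K) *\<^sub>R U j)
      = (\<Sum>j\<in>{1..K}. (if j = k then U j else 0) - (1 / real K) *\<^sub>R U j)"
      by (intro sum.cong) (auto simp: scaleR_left_diff_distrib)
    then show ?thesis by (simp add: sum_subtractf)
  qed
  also have "\<dots> = U k - (1 / real K) *\<^sub>R (\<Sum>j\<in>{1..K}. U j)"
    using assms by (simp add: scaleR_sum_right)
  finally show ?thesis by (simp add: etf_col_def)
qed

lemma etf_inner:
  fixes U :: "nat \<Rightarrow> real ^ 'd"
  assumes K2: "K \<ge> 2" and U: "orthonormal_cols K U" and k: "k \<in> {1..K}" and l: "l \<in> {1..K}"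
  shows "etf_col K U k \<bullet> etf_col K U l = real K / (real K - 1) * (if k = l then 1 else 0) - 1 / (real K - 1)"
proof -
  define S where "S = (\<Sum>j\<in>{1..K}. U j)"
  define s where "s = sqrt (real K / (real K - 1))"
  have ss: "s * s = real K / (real K - 1)" unfolding s_def using K2
    by (simp add: real_sqrt_mult_self divide_nonneg_nonneg)
  have US: "U a \<bullet> S = 1" if "a \<in> {1..K}" for a
  proof -
    have "U a \<bullet> S = (\<Sum>j\<in>{1..K}. U a \<bullet> U j)" by (simp add: S_def inner_sum_right)
    also have "\<dots> = (\<Sum>j\<in>{1..K}. if a = j then 1 else 0)"
      using U that unfolding orthonormal_cols_def by (intro sum.cong) auto
    also have "\<dots> = 1" using that by simp
    finally show ?thesis .
  qed
  have SS: "S \<bullet> S = real K"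
  proof -
    have "S \<bullet> S = (\<Sum>j\<in>{1..K}. U j \<bullet> S)" by (simp add: S_def inner_sum_left)
    also have "\<dots> = (\<Sum>j\<in>{1..K}. 1)" using US by (intro sum.cong) auto
    finally show ?thesis by simp
  qed
  have Ukl: "U k \<bullet> U l = (if k = l then 1 else 0)" using U k l unfolding orthonormal_cols_def by auto
  have ek: "etf_col K U k = s *\<^sub>R (U k - (1 / real K) *\<^sub>R S)"
    using etf_col_alt[OF k] by (simp add: S_def s_def)
  have el: "etf_col K U l = s *\<^sub>R (U l - (1 / real K) *\<^sub>R S)"
    using etf_col_alt[OF l] by (simp add: S_def s_def)
  have "etf_col K U k \<bullet> etf_col K U l = s * s * ((U k - (1 / real K) *\<^sub>R S) \<bullet> (U l - (1 / real K) *\<^sub>R S))"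
    unfolding ek el by (simp only: inner_scaleR_left inner_scaleR_right mult.assoc)
  also have "(U k - (1 / real K) *\<^sub>R S) \<bullet> (U l - (1 / real K) *\<^sub>R S) = (if k = l then 1 else 0) - 1 / real K"
    using US[OF k] US[OF l] SS Ukl K2
    by (simp add: inner_diff_left inner_diff_right inner_commute power2_eq_square field_simps)
  also have "s * s * ((if k = l then 1 else 0) - 1 / real K) = real K / (real K - 1) * (if k = l then 1 else 0) - 1 / (real K - 1)"
  proof -
    have x: "real K - 1 \<noteq> 0" "real K \<noteq> 0" using K2 by auto
    have "(real K - 1) * (real K - 1) \<noteq> 0" using x by simp
    then have "1 + real K * real K \<noteq> real K * 2" by (simp add: algebra_simps)
    then show ?thesis unfolding ss using x by (cases "k = l") (simp_all add: field_simps)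
  qed
  finally show ?thesis .
qed

lemma etf_sum:
  fixes U :: "nat \<Rightarrow> real ^ 'd"
  assumes K2: "K \<ge> 2"
  shows "(\<Sum>j\<in>{1..K}. etf_col K U j) = 0"
proof -
  define S where "S = (\<Sum>j\<in>{1..K}. U j)"
  have "(\<Sum>j\<in>{1..K}. etf_col K U j) = (\<Sum>j\<in>{1..K}. sqrt (real K / (real K - 1)) *\<^sub>R (U j - (1 / real K) *\<^sub>R S))"
    using etf_col_alt S_def by (intro sum.cong) auto
  also have "\<dots> = sqrt (real K / (real K - 1)) *\<^sub>R (S - real K *\<^sub>R ((1 / real K) *\<^sub>R S))"
  proof -
    have "(\<Sum>j\<in>{1..K}. (U j - (1 / real K) *\<^sub>R S)) = S - (\<Sum>j\<in>{1..K}. (1 / real K) *\<^sub>R S)"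
      by (simp only: sum_subtractf S_def)
    also have "\<dots> = S - real K *\<^sub>R ((1 / real K) *\<^sub>R S)"
      by (simp only: sum_constant_scaleR card_atLeastAtMost) simp
    finally show ?thesis by (simp only: scaleR_sum_right[symmetric])
  qed
  also have "\<dots> = 0" using K2 by (simp add: scaleR_scaleR)
  finally show ?thesis .
qed

lemma etf_norm:
  fixes U :: "nat \<Rightarrow> real ^ 'd"
  assumes K2: "K \<ge> 2" and U: "orthonormal_cols K U" and k: "k \<in> {1..K}"
  shows "etf_col K U k \<bullet> etf_col K U k = 1" "norm (etf_col K U k) = 1"
proof -
  show h: "etf_col K U k \<bullet> etf_col K U k = 1"
  proof -
    have x: "real K - 1 \<noteq> 0" using K2 by simp
    have f0: "real K / (real K - 1) * 1 - 1 / (real K - 1) = (real K - 1) / (real K - 1)"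
      by (simp only: mult_1_right diff_divide_distrib)
    have f: "real K / (real K - 1) * 1 - 1 / (real K - 1) = 1" using x f0 by simp
    have "etf_col K U k \<bullet> etf_col K U k = real K / (real K - 1) * 1 - 1 / (real K - 1)"
      using etf_inner[OF K2 U k k] by (simp only: simp_thms if_True)
    then show ?thesis using f by simp
  qed
  show "norm (etf_col K U k) = 1" by (simp add: norm_eq_sqrt_inner h)
qed

lemma inner_ge1:
  fixes U :: "nat \<Rightarrow> real ^ 'd"
  assumes K2: "K \<ge> 2" and U: "orthonormal_cols K U" and k: "k \<in> {1..K}"
    and m: "(norm m)^2 \<le> 1" and ge: "etf_col K U k \<bullet> m \<ge> 1"
  shows "m = etf_col K U k"
proof -
  let ?w = "etf_col K U k"
  have "(norm (m - ?w))^2 = m \<bullet> m - 2 * (?w \<bullet> m) + ?w \<bullet> ?w"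
    by (simp add: power2_norm_eq_inner inner_diff_left inner_diff_right inner_commute)
  also have "\<dots> \<le> 0" using m ge etf_norm(1)[OF K2 U k] by (simp add: power2_norm_eq_inner)
  finally have "norm (m - ?w) = 0" by simp
  then show ?thesis by simp
qed

lemma inner_le1:
  fixes U :: "nat \<Rightarrow> real ^ 'd"
  assumes K2: "K \<ge> 2" and U: "orthonormal_cols K U" and k: "k \<in> {1..K}"
    and m: "(norm m)^2 \<le> 1"
  shows "etf_col K U k \<bullet> m \<le> 1"
proof -
  have "norm m \<le> 1" using m by (simp add: power_le_one_iff abs_le_square_iff[of _ 1, simplified])
  have "etf_col K U k \<bullet> m \<le> norm (etf_col K U k) * norm m" by (rule norm_cauchy_schwarz)
  also have "\<dots> \<le> 1" using etf_norm(2)[OF K2 U k] \<open>norm m \<le> 1\<close> by simp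
  finally show ?thesis .
qed

lemma ce_form:
  fixes W :: "nat \<Rightarrow> real ^ 'd"
  assumes k: "k \<in> {1..K}"
  shows "loss CrossEntropy K W k m = ln (\<Sum>j\<in>{1..K}. exp (W j \<bullet> m - W k \<bullet> m))"
proof -
  let ?a = "W k \<bullet> m"
  have e: "(\<Sum>j\<in>{1..K}. exp (W j \<bullet> m)) = exp ?a * (\<Sum>j\<in>{1..K}. exp (W j \<bullet> m - ?a))"
    by (simp add: sum_distrib_left exp_diff)
  have pos: "(\<Sum>j\<in>{1..K}. exp (W j \<bullet> m - ?a)) > 0"
    using k by (intro sum_pos) auto
  have "exp ?a / (\<Sum>j\<in>{1..K}. exp (W j \<bullet> m)) = inverse (\<Sum>j\<in>{1..K}. exp (W j \<bullet> m - ?a))"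
    unfolding e by (simp add: field_simps)
  then show ?thesis unfolding loss_def using pos by (simp add: ln_inverse)
qed

lemma loss_unique:
  fixes U :: "nat \<Rightarrow> real ^ 'd"
  assumes K2: "K \<ge> 2" and U: "orthonormal_cols K U" and k: "k \<in> {1..K}"
    and m: "(norm m)^2 \<le> 1"
    and le: "loss L K (etf_col K U) k m \<le> loss L K (etf_col K U) k (etf_col K U k)"
  shows "m = etf_col K U k"
proof -
  let ?W = "etf_col K U"
  let ?a = "?W k \<bullet> m"
  have ww: "?W k \<bullet> ?W k = 1" using etf_norm(1)[OF K2 U k] .
  show ?thesis
  proof (cases L)
    case DotRegression
    then have "(?a - 1)^2 \<le> 0" using le ww by (simp add: loss_def)
    then have "?a = 1" by simp
    then show ?thesis using inner_ge1[OF K2 U k m] by simp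
  next
    case CrossEntropy
    define c where "c = - real K * ?a / (real K - 1)"
    define c0 where "c0 = - real K / (real K - 1)"
    have Kr: "real K - 1 > 0" using K2 by simp
    have fin: "finite ({1..K} - {k})" by simp
    have split: "(\<Sum>j\<in>{1..K}. g j) = g k + (\<Sum>j\<in>{1..K} - {k}. g j)" for g :: "nat \<Rightarrow> real"
      using k by (simp add: sum.remove)
    have cardr: "real (card ({1..K} - {k})) = real K - 1" using k by (simp add: of_nat_diff)
    have cardr2: "real (card ({Suc 0..K} - {k})) = real K - 1" using cardr by simp
    have sumW: "(\<Sum>j\<in>{1..K}. ?W j \<bullet> m) = 0"
      using etf_sum[OF K2, of U] by (simp add: inner_sum_left[symmetric])
    have sumb: "(\<Sum>j\<in>{1..K} - {k}. ?W j \<bullet> m - ?a) = - real K * ?a"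
    proof -
      have "(\<Sum>j\<in>{1..K} - {k}. ?W j \<bullet> m - ?a) = (\<Sum>j\<in>{1..K} - {k}. ?W j \<bullet> m) - (real K - 1) * ?a"
        by (simp only: sum_subtractf sum_constant cardr)
      also have "(\<Sum>j\<in>{1..K} - {k}. ?W j \<bullet> m) = - ?a" using sumW split[of "\<lambda>j. ?W j \<bullet> m"] by simp
      finally show ?thesis by (simp add: algebra_simps)
    qed
    have tang: "exp b \<ge> exp c * (1 + b - c)" for b
    proof -
      have "1 + (b - c) \<le> exp (b - c)" by (rule exp_ge_add_one_self)
      then have "exp c * (1 + (b - c)) \<le> exp c * exp (b - c)" by (intro mult_left_mono) auto
      moreover have "1 + b - c = 1 + (b - c)" by simp
      ultimately show ?thesis by (simp only: exp_diff) simp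
    qed
    have lower: "(\<Sum>j\<in>{1..K} - {k}. exp (?W j \<bullet> m - ?a)) \<ge> (real K - 1) * exp c"
    proof -
      have "(\<Sum>j\<in>{1..K} - {k}. exp c * (1 + (?W j \<bullet> m - ?a) - c)) \<le> (\<Sum>j\<in>{1..K} - {k}. exp (?W j \<bullet> m - ?a))"
        by (intro sum_mono tang)
      moreover have "(\<Sum>j\<in>{1..K} - {k}. exp c * (1 + (?W j \<bullet> m - ?a) - c)) = exp c * ((real K - 1) * (1 - c) + (\<Sum>j\<in>{1..K} - {k}. ?W j \<bullet> m - ?a))"
        by (simp add: sum_distrib_left[symmetric] sum.distrib sum_subtractf cardr2 algebra_simps)
      moreover have "(real K - 1) * (1 - c) + - real K * ?a = real K - 1"
        unfolding c_def using Kr by (simp add: field_simps)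
      ultimately show ?thesis using sumb by (simp add: mult.commute)
    qed
    have atW: "(\<Sum>j\<in>{1..K} - {k}. exp (?W j \<bullet> ?W k - ?W k \<bullet> ?W k)) = (real K - 1) * exp c0"
    proof -
      have "(\<Sum>j\<in>{1..K} - {k}. exp (?W j \<bullet> ?W k - ?W k \<bullet> ?W k)) = (\<Sum>j\<in>{1..K} - {k}. exp c0)"
      proof (intro sum.cong refl)
        fix j assume j: "j \<in> {1..K} - {k}"
        have "?W j \<bullet> ?W k = - 1 / (real K - 1)" using etf_inner[OF K2 U, of j k] j k by auto
        then show "exp (?W j \<bullet> ?W k - ?W k \<bullet> ?W k) = exp c0" unfolding c0_def ww using Kr
          by (simp add: field_simps)
      qed
      then show ?thesis by (simp add: cardr2)
    qed
    have le2: "ln (1 + (\<Sum>j\<in>{1..K} - {k}. exp (?W j \<bullet> m - ?a))) \<le> ln (1 + (real K - 1) * exp c0)"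
      using le CrossEntropy ce_form[OF k, of ?W m] ce_form[OF k, of ?W "?W k"]
        split[of "\<lambda>j. exp (?W j \<bullet> m - ?a)"] split[of "\<lambda>j. exp (?W j \<bullet> ?W k - ?W k \<bullet> ?W k)"] atW
      by simp
    have p1: "0 < 1 + (\<Sum>j\<in>{1..K} - {k}. exp (?W j \<bullet> m - ?a))"
      by (intro add_pos_nonneg sum_nonneg) auto
    have p2: "0 < 1 + (real K - 1) * exp c0" using Kr by (simp add: add_pos_nonneg)
    have "1 + (\<Sum>j\<in>{1..K} - {k}. exp (?W j \<bullet> m - ?a)) \<le> 1 + (real K - 1) * exp c0"
      using le2 p1 p2 by simp
    with lower have "(real K - 1) * exp c \<le> (real K - 1) * exp c0" by linarith
    then have "exp c \<le> exp c0" using Kr by simp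
    then have "c \<le> c0" by simp
    then have "- real K * ?a / (real K - 1) \<le> - real K / (real K - 1)" unfolding c_def c0_def .
    then have "- real K * ?a \<le> - real K" using Kr by (simp add: divide_le_cancel)
    then have "real K * (?a - 1) \<ge> 0" by (simp add: algebra_simps)
    then have "?a \<ge> 1" using K2 by (simp add: zero_le_mult_iff)
    then show ?thesis using inner_ge1[OF K2 U k m] by simp
  qed
qed

lemma sum_update:
  fixes g g' :: "'a \<Rightarrow> real"
  assumes "finite A" "a \<in> A" "\<forall>x\<in>A - {a}. g' x = g x"
  shows "sum g' A = sum g A - g a + g' a"
proof -
  have "sum g' A = g' a + sum g' (A - {a})" using assms by (simp add: sum.remove)
  also have "sum g' (A - {a}) = sum g (A - {a})" using assms(3) by (intro sum.cong) auto
  also have "sum g (A - {a}) = sum g A - g a" using assms by (simp add: sum_diff1)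
  finally show ?thesis by simp
qed

theorem theorem1:
  fixes K T :: nat
    and U :: "nat \<Rightarrow> real ^ 'd"
    and C :: "nat \<Rightarrow> nat set"
    and n :: "nat \<Rightarrow> nat"
    and L :: loss_kind
    and Mhat :: "nat \<Rightarrow> nat \<Rightarrow> nat \<Rightarrow> real ^ 'd"
  assumes K2: "K \<ge> 2"
    and dK: "CARD('d) \<ge> K"
    and U_orth: "orthonormal_cols K U"
    and C_nonempty: "\<forall>t\<in>{0..T}. C t \<noteq> {}"
    and C_disj: "\<forall>t\<in>{0..T}. \<forall>s\<in>{0..T}. t \<noteq> s \<longrightarrow> C t \<inter> C s = {}"
    and C_cover: "(\<Union>t\<in>{0..T}. C t) = {1..K}"
    and n_pos: "\<forall>k\<in>{1..K}. n k \<ge> 1"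
    and Mhat_min: "\<forall>t\<in>{0..T}. session_global_min L K (etf_col K U) n (C t) (Mhat t)"
  shows "\<forall>t\<in>{0..T}. \<forall>k\<in>C t. \<forall>i\<in>{1..n k}.
           norm (Mhat t k i) = 1 \<and>
           (\<forall>k'\<in>{1..K}. Mhat t k i \<bullet> etf_col K U k' =
              real K / (real K - 1) * (if k = k' then 1 else 0) - 1 / (real K - 1))"
proof (intro ballI)
  fix t k i assume t: "t \<in> {0..T}" and kC: "k \<in> C t" and i: "i \<in> {1..n k}"
  let ?W = "etf_col K U"
  let ?M = "Mhat t"
  have k: "k \<in> {1..K}" using C_cover t kC by blast
  have Csub: "C t \<subseteq> {1..K}" using C_cover t by blast
  have finC: "finite (C t)" using Csub finite_subset by blast
  have gm: "session_global_min L K ?W n (C t) ?M" using Mhat_min t by blast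
  have feas: "session_feasible n (C t) ?M" using gm unfolding session_global_min_def by blast
  define M' where "M' = ?M(k := (?M k)(i := ?W k))"
  have feas': "session_feasible n (C t) M'"
    using feas etf_norm(2)[OF K2 U_orth k] unfolding session_feasible_def M'_def by auto
  have objle: "session_obj L K ?W n (C t) ?M \<le> session_obj L K ?W n (C t) M'"
    using gm feas' unfolding session_global_min_def by blast
  have Npos: "real (\<Sum>k\<in>C t. n k) > 0"
  proof -
    have "n k \<le> (\<Sum>k\<in>C t. n k)" using finC kC by (intro member_le_sum) auto
    then have "0 < (\<Sum>k\<in>C t. n k)" using n_pos k by (metis (no_types) less_le_trans zero_less_one_class.zero_less_one le_trans)
    then show ?thesis by (simp only: of_nat_0_less_iff)
  qed
  define G where "G = (\<lambda>M k. \<Sum>i\<in>{1..n k}. loss L K ?W k (M k i))"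
  have inner: "G M' k = G ?M k - loss L K ?W k (?M k i) + loss L K ?W k (?W k)"
  proof -
    have "(\<Sum>i\<in>{1..n k}. loss L K ?W k (M' k i)) = (\<Sum>i\<in>{1..n k}. loss L K ?W k (?M k i)) - loss L K ?W k (?M k i) + loss L K ?W k (M' k i)"
      using i by (intro sum_update[where g = "\<lambda>i. loss L K ?W k (?M k i)" and g' = "\<lambda>i. loss L K ?W k (M' k i)"]) (auto simp: M'_def)
    then show ?thesis unfolding G_def by (simp add: M'_def)
  qed
  have outer: "(\<Sum>k\<in>C t. G M' k) = (\<Sum>k\<in>C t. G ?M k) - G ?M k + G M' k"
    using finC kC by (intro sum_update[where g = "G ?M" and g' = "G M'"]) (auto simp: M'_def G_def)
  have "(\<Sum>k\<in>C t. G ?M k) \<le> (\<Sum>k\<in>C t. G M' k)"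
    using objle Npos unfolding session_obj_def G_def by (simp add: divide_le_cancel)
  then have lle: "loss L K ?W k (?M k i) \<le> loss L K ?W k (?W k)" using inner outer by simp
  have mn: "(norm (?M k i))^2 \<le> 1" using feas kC i unfolding session_feasible_def by blast
  have eq: "?M k i = ?W k" using loss_unique[OF K2 U_orth k mn lle] .
  show "norm (Mhat t k i) = 1 \<and>
           (\<forall>k'\<in>{1..K}. Mhat t k i \<bullet> etf_col K U k' =
              real K / (real K - 1) * (if k = k' then 1 else 0) - 1 / (real K - 1))"
    using eq etf_norm(2)[OF K2 U_orth k] etf_inner[OF K2 U_orth k] by simp
qed

end
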